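(* Let $n,r,s\ge1$ and positive integers $m_1,\dots,m_r$, $n_1,\dots,n_s$ with $\sum_i m_i=\sum_k n_k=n$ and $r+s=n+1$. Let $\mathbf V\subset\mathbb{C}^{r+s}=\mathbb{C}^{n+1}$ be the set of $(\beta_1,\dots,\beta_r,\gamma_1,\dots,\gamma_s)$ satisfying $\sum_i m_i\beta_i=0$, $\sum_k n_k\gamma_k=0$ and the polynomial identity $\prod_{i=1}^r(z-\beta_i)^{m_i}=1+\prod_{k=1}^s(z-\gamma_k)^{n_k}$ in $\mathbb{C}[z]$, and let $\mathbf C\subset\mathbb{C}^n$ be the image of $\mathbf V$ under the map sending $(\beta,\gamma)$ to the coefficient vector $(a_0,\dots,a_{n-1})$ of $\prod_i(z-\beta_i)^{m_i}=z^n+a_{n-1}z^{n-1}+\dots+a_0$. Then each of $\mathbf V$ and $\mathbf C$ is either empty or of dimension $0$ (i.e. a finite set). *)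

theory Defs
  imports Complex_Main "HOL-Computational_Algebra.Polynomial"
begin

definition betaPoly :: "nat list \<Rightarrow> complex list \<Rightarrow> complex poly" where
  "betaPoly ms b = (\<Prod>i<length ms. [:-(b!i), 1:] ^ (ms!i))"

definition Vset :: "nat list \<Rightarrow> nat list \<Rightarrow> (complex list \<times> complex list) set" where
  "Vset ms ns = {(b, g). length b = length ms \<and> length g = length ns
     \<and> (\<Sum>i<length ms. of_nat (ms!i) * b!i) = 0
     \<and> (\<Sum>k<length ns. of_nat (ns!k) * g!k) = 0
     \<and> betaPoly ms b = 1 + betaPoly ns g}"

definition Cset :: "nat list \<Rightarrow> nat list \<Rightarrow> complex list set" where
  "Cset ms ns = (\<lambda>(b, g). map (\<lambda>j. coeff (betaPoly ms b) j) [0..<sum_list ms]) ` Vset ms ns"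

end

theory Submission
  imports Defs "HOL-Computational_Algebra.Polynomial_Factorial" "HOL-Computational_Algebra.Field_as_Ring" "HOL-Computational_Algebra.Fundamental_Theorem_Algebra" "HOL-Analysis.Analysis"
begin







definition lin :: "complex \<Rightarrow> complex poly" where "lin c = [:-c, 1:]"

definition PP :: "(nat \<Rightarrow> nat) \<Rightarrow> nat \<Rightarrow> (nat \<Rightarrow> complex) \<Rightarrow> complex poly" where
  "PP m r b = (\<Prod>i<r. lin (b i) ^ m i)"

definition AA :: "(nat \<Rightarrow> nat) \<Rightarrow> nat \<Rightarrow> (nat \<Rightarrow> complex) \<Rightarrow> complex poly" where
  "AA m r b = (\<Prod>i<r. lin (b i) ^ (m i - 1))"

definition pp :: "nat \<Rightarrow> (nat \<Rightarrow> complex) \<Rightarrow> complex poly" where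
  "pp r b = (\<Prod>i<r. lin (b i))"

definition SS :: "(nat \<Rightarrow> complex) \<Rightarrow> nat \<Rightarrow> (nat \<Rightarrow> complex) \<Rightarrow> complex poly" where
  "SS w r b = (\<Sum>i<r. smult (w i) (\<Prod>j\<in>{..<r}-{i}. lin (b j)))"

lemma poly_lin[simp]: "poly (lin c) z = z - c" by (simp add: lin_def)
lemma pderiv_lin[simp]: "pderiv (lin c) = 1" by (simp add: lin_def pderiv_pCons)
lemma lin_nz[simp]: "lin c \<noteq> 0" by (simp add: lin_def)
lemma degree_lin[simp]: "degree (lin c) = 1" by (simp add: lin_def)
lemma lead_lin[simp]: "lead_coeff (lin c) = 1" by (simp add: lin_def)

lemma poly_PP: "poly (PP m r b) z = (\<Prod>i<r. (z - b i) ^ m i)"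
  by (simp add: PP_def poly_prod)
lemma poly_AA: "poly (AA m r b) z = (\<Prod>i<r. (z - b i) ^ (m i - 1))"
  by (simp add: AA_def poly_prod)
lemma poly_pp: "poly (pp r b) z = (\<Prod>i<r. (z - b i))"
  by (simp add: pp_def poly_prod)
lemma poly_SS: "poly (SS w r b) z = (\<Sum>i<r. w i * (\<Prod>j\<in>{..<r}-{i}. (z - b j)))"
  by (simp add: SS_def poly_sum poly_prod)

lemma SS_0[simp]: "SS w 0 b = 0" by (simp add: SS_def)

lemma SS_Suc: "SS w (Suc r) b = SS w r b * lin (b r) + smult (w r) (pp r b)"
proof -
  have 1: "(\<Prod>j\<in>{..<Suc r}-{i}. lin (b j)) = lin (b r) * (\<Prod>j\<in>{..<r}-{i}. lin (b j))" if "i < r" for i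
  proof -
    have "{..<Suc r}-{i} = insert r ({..<r}-{i})" using that by auto
    then show ?thesis by simp
  qed
  have 2: "{..<Suc r}-{r} = {..<r}" by auto
  show ?thesis
  proof -
    have "(\<Sum>i<r. smult (w i) (\<Prod>j\<in>{..<Suc r}-{i}. lin (b j))) = (\<Sum>i<r. smult (w i) (\<Prod>j\<in>{..<r}-{i}. lin (b j)) * lin (b r))"
      by (rule sum.cong) (auto simp: 1 algebra_simps)
    then show ?thesis unfolding SS_def pp_def by (simp add: 2 sum_distrib_right)
  qed
qed

lemma PP_eq_AA_pp: assumes "\<forall>i<r. m i \<ge> 1" shows "PP m r b = AA m r b * pp r b"
proof -
  have "lin (b i) ^ m i = lin (b i) ^ (m i - 1) * lin (b i)" if "i<r" for i
    using assms that by (metis Suc_diff_le diff_Suc_1 power_Suc2)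
  then show ?thesis unfolding PP_def AA_def pp_def by (simp add: prod.distrib[symmetric])
qed

lemma pderiv_PP: assumes "\<forall>i<r. m i \<ge> 1"
  shows "pderiv (PP m r b) = AA m r b * SS (\<lambda>i. of_nat (m i)) r b"
  using assms
proof (induction r)
  case 0 then show ?case by (simp add: PP_def)
next
  case (Suc r)
  have IH: "pderiv (PP m r b) = AA m r b * SS (\<lambda>i. of_nat (m i)) r b" using Suc by auto
  have e: "PP m r b = AA m r b * pp r b" using Suc.prems PP_eq_AA_pp by auto
  have mr: "m r \<ge> 1" using Suc.prems by auto
  have pw: "lin (b r) ^ m r = lin (b r) ^ (m r - 1) * lin (b r)"
    using mr by (metis Suc_diff_le diff_Suc_1 power_Suc2)
  have "pderiv (PP m (Suc r) b) = PP m r b * pderiv (lin (b r) ^ m r) + lin (b r) ^ m r * pderiv (PP m r b)"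
    by (simp add: PP_def pderiv_mult)
  also have "\<dots> = AA m (Suc r) b * SS (\<lambda>i. of_nat (m i)) (Suc r) b"
    unfolding IH SS_Suc pderiv_power
    apply (subst e)
    unfolding AA_def
    apply (subst pw)
    by (simp add: algebra_simps)
  finally show ?case .
qed

lemma coeff_lin1[simp]: "coeff (lin c) (Suc 0) = 1" by (simp add: lin_def)
lemma prod_lin_nz: "(\<Prod>j\<in>X. lin (b j)) \<noteq> 0" by (induction X rule: infinite_finite_induct) auto

lemma degree_prod_lin: "finite X \<Longrightarrow> degree (\<Prod>j\<in>X. lin (b j)) = card X"
  by (simp add: degree_prod_sum_eq)
lemma lead_prod_lin: "lead_coeff (\<Prod>j\<in>X. lin (b j)) = 1"
  by (simp add: lead_coeff_prod)

lemma PP_nz: "PP m r b \<noteq> 0" by (simp add: PP_def prod_zero_iff)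
lemma AA_nz: "AA m r b \<noteq> 0" by (simp add: AA_def prod_zero_iff)
lemma pp_nz: "pp r b \<noteq> 0" by (simp add: pp_def prod_zero_iff)

lemma degree_PP: "degree (PP m r b) = (\<Sum>i<r. m i)"
  by (simp add: PP_def degree_prod_sum_eq degree_power_eq)
lemma degree_AA: "degree (AA m r b) = (\<Sum>i<r. m i - 1)"
  by (simp add: AA_def degree_prod_sum_eq degree_power_eq)
lemma lead_AA: "lead_coeff (AA m r b) = 1"
  by (simp add: AA_def lead_coeff_prod lead_coeff_power)
lemma lead_PP: "lead_coeff (PP m r b) = 1"
  by (simp add: PP_def lead_coeff_prod lead_coeff_power)

lemma degree_SS: "degree (SS w r b) \<le> r - 1"
  unfolding SS_def
proof (rule degree_sum_le)
  fix i assume "i \<in> {..<r}"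
  then have "card ({..<r}-{i}) = r - 1" by simp
  then show "degree (smult (w i) (\<Prod>j\<in>{..<r}-{i}. lin (b j))) \<le> r - 1"
    by (metis degree_prod_lin degree_smult_le dual_order.trans finite_Diff finite_lessThan)
qed simp

lemma coeff_SS: "coeff (SS w r b) (r - 1) = (\<Sum>i<r. w i)"
  unfolding SS_def coeff_sum
proof (rule sum.cong)
  fix i assume "i \<in> {..<r}"
  then have "card ({..<r}-{i}) = r - 1" by simp
  then have "degree (\<Prod>j\<in>{..<r}-{i}. lin (b j)) = r - 1" by (simp add: degree_prod_lin)
  then show "coeff (smult (w i) (\<Prod>j\<in>{..<r}-{i}. lin (b j))) (r - 1) = w i"
    using lead_prod_lin[where X="{..<r}-{i}" and b=b] by simp
qed simp

lemma poly_SS_at: assumes "i < r"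
  shows "poly (SS w r b) (b i) = w i * (\<Prod>j\<in>{..<r}-{i}. (b i - b j))"
proof -
  have "poly (SS w r b) (b i) = (\<Sum>l\<in>{..<r}. w l * (\<Prod>j\<in>{..<r}-{l}. (b i - b j)))"
    by (simp add: poly_SS)
  also have "\<dots> = w i * (\<Prod>j\<in>{..<r}-{i}. (b i - b j))"
  proof -
    have "(\<Sum>l\<in>{..<r}. w l * (\<Prod>j\<in>{..<r}-{l}. (b i - b j))) =
      w i * (\<Prod>j\<in>{..<r}-{i}. (b i - b j)) + (\<Sum>l\<in>{..<r}-{i}. w l * (\<Prod>j\<in>{..<r}-{l}. (b i - b j)))"
      using assms by (simp add: sum.remove)
    moreover have "(\<Sum>l\<in>{..<r}-{i}. w l * (\<Prod>j\<in>{..<r}-{l}. (b i - b j))) = 0"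
    proof (rule sum.neutral, rule ballI)
      fix l assume l: "l \<in> {..<r}-{i}"
      then have "i \<in> {..<r}-{l}" using assms by auto
      then have "(\<Prod>j\<in>{..<r}-{l}. (b i - b j)) = 0"
        by (metis (no_types, lifting) diff_self finite_Diff finite_lessThan prod_zero_iff)
      then show "w l * (\<Prod>j\<in>{..<r}-{l}. (b i - b j)) = 0" by simp
    qed
    ultimately show ?thesis by simp
  qed
  finally show ?thesis .
qed

lemma dvd_same_degree:
  fixes B S :: "complex poly"
  assumes "lead_coeff B = 1" "degree S \<le> degree B" "B dvd S"
  shows "S = smult (coeff S (degree B)) B"
proof -
  obtain q where q: "S = B * q" using assms(3) by (auto elim: dvdE)
  have B0: "B \<noteq> 0" using assms(1) by auto
  show ?thesis
  proof (cases "q = 0")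
    case True then show ?thesis using q by simp
  next
    case False
    then have "degree S = degree B + degree q" using q B0 degree_mult_eq by blast
    then have "degree q = 0" using assms(2) by simp
    then obtain k where "q = [:k:]" by (meson degree_eq_zeroE)
    then have "S = smult k B" using q by simp
    then show ?thesis using assms(1) by simp
  qed
qed

lemma degree_AA_eq: assumes "\<forall>i<r. m i \<ge> 1" "sum m {..<r} = N"
  shows "degree (AA m r b) = N - r"
proof -
  have "(\<Sum>i<r. m i - 1) = (\<Sum>i<r. m i) - (\<Sum>i<r. (1::nat))"
    using assms(1) by (intro sum_subtractf_nat) auto
  then show ?thesis using assms by (simp add: degree_AA)
qed

lemma key_alg:
  assumes m1: "\<forall>i<r. m i \<ge> 1" and n1: "\<forall>k<s. n k \<ge> 1"
    and sm: "sum m {..<r} = N" and sn: "sum n {..<s} = N" and rs: "r + s = N + 1"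
    and eq: "PP m r b = [:c:] + PP n s g" and c0: "c \<noteq> 0"
  shows "coprime (AA m r b) (AA n s g)"
    and "SS (\<lambda>i. of_nat (m i)) r b = smult (of_nat N) (AA n s g)"
proof -
  have dA: "AA m r b dvd PP m r b" using PP_eq_AA_pp[OF m1] by simp
  have dB: "AA n s g dvd PP n s g" using PP_eq_AA_pp[OF n1] by simp
  show cop: "coprime (AA m r b) (AA n s g)"
  proof (rule coprimeI)
    fix d assume "d dvd AA m r b" "d dvd AA n s g"
    then have "d dvd PP m r b" "d dvd PP n s g" using dA dB by (auto intro: dvd_trans)
    then have "d dvd PP m r b - PP n s g" by (rule dvd_diff)
    then have dc: "d dvd [:c:]" using eq by simp
    have "c dvd 1" using c0 by (intro dvdI[of _ _ "inverse c"]) simp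
    then have "is_unit [:c:]" by (simp add: is_unit_const_poly_iff)
    with dc show "is_unit d" by (rule dvd_unit_imp_unit)
  qed
  have "pderiv (PP m r b) = pderiv (PP n s g)" using eq by (simp add: pderiv_add)
  then have e: "AA m r b * SS (\<lambda>i. of_nat (m i)) r b = AA n s g * SS (\<lambda>i. of_nat (n i)) s g"
    using pderiv_PP[OF m1] pderiv_PP[OF n1] by simp
  have "AA n s g dvd AA m r b * SS (\<lambda>i. of_nat (m i)) r b" unfolding e by simp
  then have dv: "AA n s g dvd SS (\<lambda>i. of_nat (m i)) r b"
    using coprime_dvd_mult_right_iff[of "AA n s g" "AA m r b"] cop by (simp add: coprime_commute)
  have dg: "degree (AA n s g) = r - 1" using degree_AA_eq[OF n1 sn] rs by simp
  have "SS (\<lambda>i. of_nat (m i)) r b = smult (coeff (SS (\<lambda>i. of_nat (m i)) r b) (r - 1)) (AA n s g)"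
    using dvd_same_degree[OF lead_AA _ dv] dg degree_SS by simp
  also have "coeff (SS (\<lambda>i. of_nat (m i)) r b) (r - 1) = of_nat N"
    unfolding coeff_SS using sm by (simp flip: of_nat_sum)
  finally show "SS (\<lambda>i. of_nat (m i)) r b = smult (of_nat N) (AA n s g)" .
qed

lemma poly_PP_root: assumes "i < r" "m i \<ge> 1" shows "poly (PP m r b) (b i) = 0"
proof -
  have "(b i - b i) ^ m i = 0" using assms(2) by simp
  then show ?thesis unfolding poly_PP using assms(1) by (metis finite_lessThan lessThan_iff prod_zero_iff)
qed

lemma key_distinct:
  assumes m1: "\<forall>i<r. m i \<ge> 1" and n1: "\<forall>k<s. n k \<ge> 1"
    and sm: "sum m {..<r} = N" and sn: "sum n {..<s} = N" and rs: "r + s = N + 1"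
    and eq: "PP m r b = [:c:] + PP n s g" and c0: "c \<noteq> 0"
    and ij: "i < r" "j < r" "i \<noteq> j"
  shows "b i \<noteq> b j"
proof
  assume bij: "b i = b j"
  have "j \<in> {..<r}-{i}" using ij by auto
  then have "(\<Prod>l\<in>{..<r}-{i}. (b i - b l)) = 0"
    using bij by (metis (no_types, lifting) diff_self finite_Diff finite_lessThan prod_zero_iff)
  then have "poly (SS (\<lambda>i. of_nat (m i)) r b) (b i) = 0" using poly_SS_at[OF ij(1)] by simp
  then have "poly (smult (of_nat N) (AA n s g)) (b i) = 0"
    using key_alg(2)[OF m1 n1 sm sn rs eq c0] by simp
  moreover have "N \<noteq> 0"
  proof -
    have "m i \<le> sum m {..<r}" using ij(1) by (intro member_le_sum) auto
    then show ?thesis using m1 ij sm by auto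
  qed
  ultimately have "poly (AA n s g) (b i) = 0" by simp
  then have "poly (PP n s g) (b i) = 0" using PP_eq_AA_pp[OF n1] by simp
  moreover have "poly (PP m r b) (b i) = 0" using poly_PP_root ij m1 by auto
  ultimately show False using eq c0 by simp
qed

lemma key_tangent:
  assumes m1: "\<forall>i<r. m i \<ge> 1" and n1: "\<forall>k<s. n k \<ge> 1"
    and sm: "sum m {..<r} = N" and sn: "sum n {..<s} = N" and rs: "r + s = N + 1"
    and eq: "PP m r b = [:c:] + PP n s g" and c0: "c \<noteq> 0"
    and cd: "(\<Sum>i<r. of_nat (m i) * d i) = 0"
    and te: "AA m r b * SS (\<lambda>i. of_nat (m i) * d i) r b = AA n s g * SS (\<lambda>k. of_nat (n k) * e k) s g"
    and i: "i < r"
  shows "d i = 0"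
proof -
  have cop: "coprime (AA m r b) (AA n s g)" by (rule key_alg(1)[OF m1 n1 sm sn rs eq c0])
  have "AA n s g dvd AA m r b * SS (\<lambda>i. of_nat (m i) * d i) r b" unfolding te by simp
  then have dv: "AA n s g dvd SS (\<lambda>i. of_nat (m i) * d i) r b"
    using coprime_dvd_mult_right_iff[of "AA n s g" "AA m r b"] cop by (simp add: coprime_commute)
  have dg: "degree (AA n s g) = r - 1" using degree_AA_eq[OF n1 sn] rs by simp
  have "SS (\<lambda>i. of_nat (m i) * d i) r b = smult (coeff (SS (\<lambda>i. of_nat (m i) * d i) r b) (r - 1)) (AA n s g)"
    using dvd_same_degree[OF lead_AA _ dv] dg degree_SS by simp
  also have "coeff (SS (\<lambda>i. of_nat (m i) * d i) r b) (r - 1) = 0"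
    unfolding coeff_SS using cd by simp
  finally have S0: "SS (\<lambda>i. of_nat (m i) * d i) r b = 0" by simp
  have "poly (SS (\<lambda>i. of_nat (m i) * d i) r b) (b i) = of_nat (m i) * d i * (\<Prod>j\<in>{..<r}-{i}. (b i - b j))"
    by (rule poly_SS_at[OF i])
  moreover have "(\<Prod>j\<in>{..<r}-{i}. (b i - b j)) \<noteq> 0"
    using key_distinct[OF m1 n1 sm sn rs eq c0 i] by (simp add: prod_zero_iff)
  moreover have "m i \<noteq> 0" using m1 i by auto
  ultimately show ?thesis using S0 by simp
qed

lemma size_proots_sum:
  fixes P :: "complex poly"
  assumes "P \<noteq> 0" "finite X" "{x. poly P x = 0} \<subseteq> X"
  shows "degree P = (\<Sum>x\<in>X. order x P)"
proof -
  have "degree P = size (proots P)" by (simp add: size_proots_complex)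
  also have "\<dots> = (\<Sum>x\<in>set_mset (proots P). count (proots P) x)"
    by (simp add: size_multiset_overloaded_eq)
  also have "\<dots> = (\<Sum>x\<in>X. count (proots P) x)"
    using assms by (intro sum.mono_neutral_left) (auto simp: order_root)
  also have "\<dots> = (\<Sum>x\<in>X. order x P)" using assms(1) by simp
  finally show ?thesis .
qed

lemma single_root:
  fixes P :: "complex poly"
  assumes dg: "degree P \<ge> 1" and rt: "\<And>w. poly (pderiv P) w = 0 \<Longrightarrow> poly P w = 0"
    and x: "poly P x = 0" and y: "poly P y = 0"
  shows "x = y"
proof -
  have P0: "P \<noteq> 0" using dg by auto
  have P'0: "pderiv P \<noteq> 0" using dg by (simp add: pderiv_eq_0_iff)
  define X where "X = {x. poly P x = 0}"
  have fX: "finite X" unfolding X_def using P0 by (rule poly_roots_finite)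
  have s1: "degree P = (\<Sum>x\<in>X. order x P)" using size_proots_sum[OF P0 fX] X_def by simp
  have s2: "degree (pderiv P) = (\<Sum>x\<in>X. order x (pderiv P))"
    using size_proots_sum[OF P'0 fX] rt X_def by auto
  have "(\<Sum>x\<in>X. order x P) = (\<Sum>x\<in>X. Suc (order x (pderiv P)))"
    using P0 by (intro sum.cong) (auto simp: X_def order_pderiv)
  also have "\<dots> = (\<Sum>x\<in>X. order x (pderiv P)) + card X" by (rule sum_Suc)
  finally have "degree P = degree (pderiv P) + card X" using s1 s2 by simp
  then have "card X = 1" using dg by (simp add: degree_pderiv)
  then obtain z where z: "X = {z}" by (rule card_1_singletonE)
  have "x \<in> X" "y \<in> X" using x y X_def by auto
  then show ?thesis using z by simp
qed

lemma key_zero: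
  assumes m1: "\<forall>i<r. m i \<ge> 1" and n1: "\<forall>k<s. n k \<ge> 1"
    and sm: "sum m {..<r} = N" and sn: "sum n {..<s} = N" and N1: "N \<ge> 1"
    and eq: "PP m r b = PP n s g"
    and eS: "SS (\<lambda>i. of_nat (m i)) r b = smult (of_nat N) (AA n s g)"
    and cd: "(\<Sum>i<r. of_nat (m i) * b i) = 0"
  shows "(\<forall>i<r. b i = 0) \<and> (\<forall>k<s. g k = 0)"
proof -
  define P where "P = PP m r b"
  have d1: "pderiv P = smult (of_nat N) (AA m r b * AA n s g)"
    unfolding P_def pderiv_PP[OF m1] eS by simp
  have e1: "P = AA m r b * pp r b" unfolding P_def by (rule PP_eq_AA_pp[OF m1])
  have e2: "P = AA n s g * pp s g" unfolding P_def eq by (rule PP_eq_AA_pp[OF n1])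
  have key: "pderiv P * (pp r b * pp s g) = smult (of_nat N) (P * P)"
    by (subst (2) e1, subst (2) e2) (simp add: d1 algebra_simps)
  have rt: "poly P w = 0" if "poly (pderiv P) w = 0" for w
  proof -
    have "poly (smult (of_nat N) (P * P)) w = 0" unfolding key[symmetric] using that by simp
    then show ?thesis using N1 by simp
  qed
  have dg: "degree P \<ge> 1" unfolding P_def degree_PP sm using N1 .
  have "\<exists>i. i < r" 
  proof (rule ccontr)
    assume "\<not> (\<exists>i. i < r)" then have "r = 0" by auto
    then show False using sm N1 by simp
  qed
  then obtain i0 where i0: "i0 < r" by blast
  have rb: "poly P (b i) = 0" if "i < r" for i unfolding P_def using poly_PP_root that m1 by auto
  have rg: "poly P (g k) = 0" if "k < s" for k unfolding P_def eq using poly_PP_root that n1 by auto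
  have all: "b i = b i0" if "i < r" for i using single_root[OF dg rt rb[OF that] rb[OF i0]] by blast
  have "(\<Sum>i<r. of_nat (m i) * b i) = (\<Sum>i<r. of_nat (m i) * b i0)"
    using all by (intro sum.cong) auto
  also have "\<dots> = of_nat N * b i0" using sm[symmetric] by (simp add: sum_distrib_right)
  finally have "b i0 = 0" using cd N1 by simp
  then show ?thesis using all single_root[OF dg rt rg rb[OF i0]] by auto
qed

lemma tendsto_PP:
  assumes "\<forall>i<r. ((\<lambda>k. B k i) \<longlongrightarrow> b i) F"
  shows "((\<lambda>k. poly (PP m r (B k)) z) \<longlongrightarrow> poly (PP m r b) z) F"
  unfolding poly_PP using assms by (auto intro!: tendsto_intros)

lemma tendsto_AA:
  assumes "\<forall>i<r. ((\<lambda>k. B k i) \<longlongrightarrow> b i) F"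
  shows "((\<lambda>k. poly (AA m r (B k)) z) \<longlongrightarrow> poly (AA m r b) z) F"
  unfolding poly_AA using assms by (auto intro!: tendsto_intros)

lemma tendsto_pp:
  assumes "\<forall>i<r. ((\<lambda>k. B k i) \<longlongrightarrow> b i) F"
  shows "((\<lambda>k. poly (pp r (B k)) z) \<longlongrightarrow> poly (pp r b) z) F"
  unfolding poly_pp using assms by (auto intro!: tendsto_intros)

lemma tendsto_SS:
  assumes "\<forall>i<r. ((\<lambda>k. B k i) \<longlongrightarrow> b i) F"
  shows "((\<lambda>k. poly (SS w r (B k)) z) \<longlongrightarrow> poly (SS w r b) z) F"
  unfolding poly_SS using assms by (auto intro!: tendsto_intros)

lemma dq_pow:
  fixes eps D :: "nat \<Rightarrow> complex"
  assumes eps: "eps \<longlonglongrightarrow> 0" and nz: "\<And>k. eps k \<noteq> 0" and D: "D \<longlonglongrightarrow> dd"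
  shows "(\<lambda>k. ((z - (c + eps k * D k)) ^ e - (z - c) ^ e) / eps k) \<longlonglongrightarrow> - (of_nat e * dd * (z - c) ^ (e - 1))"
proof (induction e)
  case 0 then show ?case by simp
next
  case (Suc e)
  let ?a = "\<lambda>k. z - (c + eps k * D k)"
  have eq: "((?a k) ^ Suc e - (z - c) ^ Suc e) / eps k
      = ?a k * (((?a k) ^ e - (z - c) ^ e) / eps k) + (z - c) ^ e * (- D k)" for k
    using nz[of k] by (simp add: field_simps)
  have a: "?a \<longlonglongrightarrow> z - (c + 0 * dd)" using eps D by (intro tendsto_intros)
  have "(\<lambda>k. ?a k * (((?a k) ^ e - (z - c) ^ e) / eps k) + (z - c) ^ e * (- D k))
     \<longlonglongrightarrow> (z - (c + 0 * dd)) * (- (of_nat e * dd * (z - c) ^ (e - 1))) + (z - c) ^ e * (- dd)"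
    using a Suc.IH D eps by (intro tendsto_intros)
  moreover have "(z - (c + 0 * dd)) * (- (of_nat e * dd * (z - c) ^ (e - 1))) + (z - c) ^ e * (- dd)
      = - (of_nat (Suc e) * dd * (z - c) ^ (Suc e - 1))"
    by (cases e) (simp_all add: algebra_simps)
  ultimately show ?case unfolding eq by simp
qed

lemma poly_PP_Suc: "poly (PP m (Suc r) b) z = poly (PP m r b) z * (z - b r) ^ m r"
  by (simp add: poly_PP)
lemma poly_AA_Suc: "poly (AA m (Suc r) b) z = poly (AA m r b) z * (z - b r) ^ (m r - 1)"
  by (simp add: poly_AA)
lemma poly_SS_Suc: "poly (SS w (Suc r) b) z = poly (SS w r b) z * (z - b r) + w r * poly (pp r b) z"
  by (simp add: SS_Suc)

lemma dq_PP:
  fixes eps :: "nat \<Rightarrow> complex" and D :: "nat \<Rightarrow> nat \<Rightarrow> complex"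
  assumes m1: "\<forall>i<r. m i \<ge> 1" and eps: "eps \<longlonglongrightarrow> 0" and nz: "\<And>k. eps k \<noteq> 0"
    and D: "\<forall>i<r. (\<lambda>k. D k i) \<longlonglongrightarrow> d i"
  shows "(\<lambda>k. (poly (PP m r (\<lambda>i. b i + eps k * D k i)) z - poly (PP m r b) z) / eps k)
     \<longlonglongrightarrow> - (poly (AA m r b) z * poly (SS (\<lambda>i. of_nat (m i) * d i) r b) z)"
  using m1 D
proof (induction r)
  case 0 then show ?case by (simp add: poly_PP poly_AA)
next
  case (Suc r)
  let ?x = "\<lambda>k i. b i + eps k * D k i"
  have IH: "(\<lambda>k. (poly (PP m r (?x k)) z - poly (PP m r b) z) / eps k)
     \<longlonglongrightarrow> - (poly (AA m r b) z * poly (SS (\<lambda>i. of_nat (m i) * d i) r b) z)"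
    using Suc by auto
  have conv: "\<forall>i<r. (\<lambda>k. ?x k i) \<longlonglongrightarrow> b i"
  proof (intro allI impI)
    fix i assume "i < r"
    then have "(\<lambda>k. ?x k i) \<longlonglongrightarrow> b i + 0 * d i" using Suc.prems eps by (intro tendsto_intros) auto
    then show "(\<lambda>k. ?x k i) \<longlonglongrightarrow> b i" by simp
  qed
  have Pc: "(\<lambda>k. poly (PP m r (?x k)) z) \<longlonglongrightarrow> poly (PP m r b) z" by (rule tendsto_PP[OF conv])
  have pw: "(\<lambda>k. ((z - (b r + eps k * D k r)) ^ m r - (z - b r) ^ m r) / eps k)
      \<longlonglongrightarrow> - (of_nat (m r) * d r * (z - b r) ^ (m r - 1))"
    using Suc.prems by (intro dq_pow eps nz) auto
  have eq: "(poly (PP m (Suc r) (?x k)) z - poly (PP m (Suc r) b) z) / eps k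
     = poly (PP m r (?x k)) z * (((z - (b r + eps k * D k r)) ^ m r - (z - b r) ^ m r) / eps k)
       + (z - b r) ^ m r * ((poly (PP m r (?x k)) z - poly (PP m r b) z) / eps k)" for k
    using nz[of k] unfolding poly_PP_Suc by (simp add: field_simps)
  have lim: "(\<lambda>k. (poly (PP m (Suc r) (?x k)) z - poly (PP m (Suc r) b) z) / eps k) \<longlonglongrightarrow>
     poly (PP m r b) z * (- (of_nat (m r) * d r * (z - b r) ^ (m r - 1)))
       + (z - b r) ^ m r * (- (poly (AA m r b) z * poly (SS (\<lambda>i. of_nat (m i) * d i) r b) z))"
    unfolding eq by (intro tendsto_intros Pc pw IH)
  have mr: "m r \<ge> 1" using Suc.prems by auto
  have m1r: "\<forall>i<r. m i \<ge> 1" using Suc.prems by auto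
  have PA: "poly (PP m r b) z = poly (AA m r b) z * poly (pp r b) z"
    using PP_eq_AA_pp[OF m1r] by simp
  have cp: "(z - b r) ^ m r = (z - b r) ^ (m r - 1) * (z - b r)"
    using mr by (metis Suc_diff_le diff_Suc_1 power_Suc2)
  have "poly (PP m r b) z * (- (of_nat (m r) * d r * (z - b r) ^ (m r - 1)))
       + (z - b r) ^ m r * (- (poly (AA m r b) z * poly (SS (\<lambda>i. of_nat (m i) * d i) r b) z))
     = - (poly (AA m (Suc r) b) z * poly (SS (\<lambda>i. of_nat (m i) * d i) (Suc r) b) z)"
    unfolding poly_AA_Suc poly_SS_Suc PA cp by (simp add: algebra_simps)
  then show ?case using lim by simp
qed

lemma bw_aux:
  fixes X :: "nat \<Rightarrow> nat \<Rightarrow> complex"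
  assumes bd: "\<forall>k i. cmod (X k i) \<le> M"
  shows "\<exists>h L. strict_mono h \<and> (\<forall>i<N. (\<lambda>k. X (h k) i) \<longlonglongrightarrow> L i)"
proof (induction N)
  case 0
  have "strict_mono (\<lambda>k::nat. k)" by (simp add: strict_mono_def)
  then show ?case by blast
next
  case (Suc N)
  then obtain h L where h: "strict_mono h" and L: "\<forall>i<N. (\<lambda>k. X (h k) i) \<longlonglongrightarrow> L i" by blast
  have "bounded (range (\<lambda>k. X (h k) N))"
    using bd by (auto simp: bounded_iff)
  then obtain l h2 where h2: "strict_mono h2" and l: "((\<lambda>k. X (h k) N) \<circ> h2) \<longlonglongrightarrow> l"
    using bounded_imp_convergent_subsequence by blast
  have "strict_mono (h \<circ> h2)" using h h2 by (rule strict_mono_o)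
  moreover have "\<forall>i<Suc N. (\<lambda>k. X ((h \<circ> h2) k) i) \<longlonglongrightarrow> (L(N := l)) i"
  proof (intro allI impI)
    fix i assume i: "i < Suc N"
    show "(\<lambda>k. X ((h \<circ> h2) k) i) \<longlonglongrightarrow> (L(N := l)) i"
    proof (cases "i = N")
      case True then show ?thesis using l by (simp add: o_def)
    next
      case False
      then have "i < N" using i by simp
      then have "((\<lambda>k. X (h k) i) \<circ> h2) \<longlonglongrightarrow> L i" using L h2 LIMSEQ_subseq_LIMSEQ by blast
      then show ?thesis using False by (simp add: o_def)
    qed
  qed
  ultimately show ?case by blast
qed

lemma bw:
  fixes X :: "nat \<Rightarrow> nat \<Rightarrow> complex"
  assumes bd: "\<forall>k i. cmod (X k i) \<le> M" and z: "\<forall>k i. i \<ge> N \<longrightarrow> X k i = 0"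
  shows "\<exists>h L. strict_mono h \<and> (\<forall>i. (\<lambda>k. X (h k) i) \<longlonglongrightarrow> L i) \<and> (\<forall>i\<ge>N. L i = 0)"
proof -
  obtain h L where h: "strict_mono h" and L: "\<forall>i<N. (\<lambda>k. X (h k) i) \<longlonglongrightarrow> L i"
    using bw_aux[OF bd] by blast
  define L' where "L' = (\<lambda>i. if i < N then L i else 0)"
  have "\<forall>i. (\<lambda>k. X (h k) i) \<longlonglongrightarrow> L' i"
  proof
    fix i show "(\<lambda>k. X (h k) i) \<longlonglongrightarrow> L' i"
    proof (cases "i < N")
      case True then show ?thesis using L L'_def by simp
    next
      case False then show ?thesis using z L'_def by simp
    qed
  qed
  moreover have "\<forall>i\<ge>N. L' i = 0" using L'_def by simp
  ultimately show ?thesis using h by blast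
qed

lemma sum_split_add: "(\<Sum>i<(r::nat)+s. f i) = (\<Sum>i<r. f i) + (\<Sum>k<s. f (r + k))"
  by (induction s) (simp_all add: add.assoc)

lemma prod_scale:
  fixes t :: complex assumes "t \<noteq> 0"
  shows "(\<Prod>j\<in>X. (t * z - b j) ^ e j) = t ^ (\<Sum>j\<in>X. e j) * (\<Prod>j\<in>X. (z - b j / t) ^ e j)"
proof -
  have "(t * z - b j) ^ e j = t ^ e j * (z - b j / t) ^ e j" for j
    using assms by (simp add: power_mult_distrib[symmetric] field_simps)
  then show ?thesis by (simp add: prod.distrib power_sum)
qed

lemma poly_PP_scale: "t \<noteq> 0 \<Longrightarrow> poly (PP m r b) (t * z) = t ^ (\<Sum>i<r. m i) * poly (PP m r (\<lambda>i. b i / t)) z"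
  unfolding poly_PP by (rule prod_scale)

lemma poly_AA_scale: "t \<noteq> 0 \<Longrightarrow> poly (AA m r b) (t * z) = t ^ (\<Sum>i<r. m i - 1) * poly (AA m r (\<lambda>i. b i / t)) z"
  unfolding poly_AA by (rule prod_scale)

lemma poly_SS_scale:
  fixes t :: complex assumes t: "t \<noteq> 0"
  shows "t * poly (SS w r b) (t * z) = t ^ r * poly (SS w r (\<lambda>i. b i / t)) z"
proof -
  have "t * (w i * (\<Prod>j\<in>{..<r}-{i}. (t * z - b j))) = t ^ r * (w i * (\<Prod>j\<in>{..<r}-{i}. (z - b j / t)))"
    if i: "i < r" for i
  proof -
    have "(\<Prod>j\<in>{..<r}-{i}. (t * z - b j)) = (\<Prod>j\<in>{..<r}-{i}. (t * z - b j) ^ 1)" by simp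
    also have "\<dots> = t ^ (\<Sum>j\<in>{..<r}-{i}. 1) * (\<Prod>j\<in>{..<r}-{i}. (z - b j / t) ^ 1)"
      by (rule prod_scale[OF t])
    also have "(\<Sum>j\<in>{..<r}-{i}. (1::nat)) = r - 1" using i by simp
    finally have e: "(\<Prod>j\<in>{..<r}-{i}. (t * z - b j)) = t ^ (r - 1) * (\<Prod>j\<in>{..<r}-{i}. (z - b j / t))" by simp
    have "t * t ^ (r - 1) = t ^ r" using i by (metis Suc_diff_1 bot_nat_0.extremum_strict neq0_conv power_Suc)
    then show ?thesis unfolding e by (simp add: algebra_simps)
  qed
  then show ?thesis unfolding poly_SS sum_distrib_left by (intro sum.cong) auto
qed



definition solset :: "(nat \<Rightarrow> nat) \<Rightarrow> nat \<Rightarrow> (nat \<Rightarrow> nat) \<Rightarrow> nat \<Rightarrow> (nat \<Rightarrow> complex) set" where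
  "solset m r n s = {x. (\<Sum>i<r. of_nat (m i) * x i) = 0 \<and> (\<Sum>k<s. of_nat (n k) * x (r + k)) = 0
     \<and> PP m r x = [:1:] + PP n s (\<lambda>k. x (r + k)) \<and> (\<forall>i\<ge>r+s. x i = 0)}"

lemma poly_eqI_fun: "(\<And>z. poly p z = poly q z) \<Longrightarrow> p = q" for p q :: "complex poly"
proof -
  assume "\<And>z. poly p z = poly q z"
  then have "poly p = poly q" by (rule ext)
  then show "p = q" by (rule poly_eq_poly_eq_iff[THEN iffD1])
qed

lemma solset_closed:
  assumes X: "\<And>k. X k \<in> solset m r n s" and L: "\<forall>i. (\<lambda>k. X k i) \<longlonglongrightarrow> L i"
  shows "L \<in> solset m r n s"
proof -
  have s1: "(\<Sum>i<r. of_nat (m i) * L i) = 0" (is "?S = 0")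
  proof -
    have "(\<lambda>k. \<Sum>i<r. of_nat (m i) * X k i) \<longlonglongrightarrow> (\<Sum>i<r. of_nat (m i) * L i)"
      using L by (auto intro!: tendsto_intros)
    moreover have "(\<lambda>k. \<Sum>i<r. of_nat (m i) * X k i) = (\<lambda>k. 0)" using X by (simp add: solset_def)
    ultimately have "(\<lambda>k. 0) \<longlonglongrightarrow> ?S" by simp
    then show ?thesis by (simp add: LIMSEQ_const_iff)
  qed
  have s2: "(\<Sum>i<s. of_nat (n i) * L (r + i)) = 0" (is "?S = 0")
  proof -
    have "(\<lambda>k. \<Sum>i<s. of_nat (n i) * X k (r + i)) \<longlonglongrightarrow> (\<Sum>i<s. of_nat (n i) * L (r + i))"
      using L by (auto intro!: tendsto_intros)
    moreover have "(\<lambda>k. \<Sum>i<s. of_nat (n i) * X k (r + i)) = (\<lambda>k. 0)" using X by (simp add: solset_def)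
    ultimately have "(\<lambda>k. 0) \<longlonglongrightarrow> ?S" by simp
    then show ?thesis by (simp add: LIMSEQ_const_iff)
  qed
  have pe: "PP m r L = [:1:] + PP n s (\<lambda>k. L (r + k))"
  proof (rule poly_eqI_fun)
    fix z
    have a: "(\<lambda>k. poly (PP m r (X k)) z) \<longlonglongrightarrow> poly (PP m r L) z" using L by (intro tendsto_PP) auto
    have b: "(\<lambda>k. 1 + poly (PP n s (\<lambda>j. X k (r + j))) z) \<longlonglongrightarrow> 1 + poly (PP n s (\<lambda>j. L (r + j))) z"
      using L by (intro tendsto_intros tendsto_PP) auto
    have "poly (PP m r (X k)) z = 1 + poly (PP n s (\<lambda>j. X k (r + j))) z" for k
    proof -
      have "PP m r (X k) = [:1:] + PP n s (\<lambda>j. X k (r + j))" using X[of k] by (simp add: solset_def)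
      then show ?thesis by simp
    qed
    then have "(\<lambda>k. poly (PP m r (X k)) z) = (\<lambda>k. 1 + poly (PP n s (\<lambda>j. X k (r + j))) z)" by (rule ext)
    then have "poly (PP m r L) z = 1 + poly (PP n s (\<lambda>j. L (r + j))) z"
      using a b LIMSEQ_unique by simp
    then show "poly (PP m r L) z = poly ([:1:] + PP n s (\<lambda>k. L (r + k))) z" by simp
  qed
  have z: "\<forall>i\<ge>r+s. L i = 0"
  proof (intro allI impI)
    fix i assume "i \<ge> r + s"
    then have "(\<lambda>k. X k i) = (\<lambda>k. 0)" using X by (auto simp: solset_def)
    then have "(\<lambda>k. 0) \<longlonglongrightarrow> L i" using L by metis
    then show "L i = 0" by (simp add: LIMSEQ_const_iff)
  qed
  show ?thesis using s1 s2 pe z by (simp add: solset_def)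
qed

lemma solset_isol:
  assumes m1: "\<forall>i<r. m i \<ge> 1" and n1: "\<forall>k<s. n k \<ge> 1"
    and sm: "sum m {..<r} = N" and sn: "sum n {..<s} = N" and rs: "r + s = N + 1"
    and LS: "L \<in> solset m r n s" and XS: "\<And>k. X k \<in> solset m r n s" and ne: "\<And>k. X k \<noteq> L"
    and conv: "\<forall>i. (\<lambda>k. X k i) \<longlonglongrightarrow> L i"
  shows False
proof -
  define eps where "eps k = (\<Sum>i<r+s. cmod (X k i - L i))" for k
  have Lz: "L i = 0" if "i \<ge> r + s" for i using LS that by (simp add: solset_def)
  have Xz: "X k i = 0" if "i \<ge> r + s" for k i using XS[of k] that by (simp add: solset_def)
  have le: "cmod (X k i - L i) \<le> eps k" if "i < r + s" for k i
    unfolding eps_def using that by (intro member_le_sum) auto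
  have epos: "eps k > 0" for k
  proof -
    obtain i where i: "X k i \<noteq> L i" using ne[of k] by blast
    then have "i < r + s" using Lz[of i] Xz[of i k] by (cases "i < r + s") auto
    then have "cmod (X k i - L i) \<le> eps k" by (rule le)
    moreover have "cmod (X k i - L i) > 0" using i by simp
    ultimately show ?thesis by linarith
  qed
  have elim: "eps \<longlonglongrightarrow> 0"
  proof -
    have "(\<lambda>k. \<Sum>i<r+s. cmod (X k i - L i)) \<longlonglongrightarrow> (\<Sum>i<r+s. cmod (L i - L i))"
      using conv by (intro tendsto_intros) auto
    then show ?thesis unfolding eps_def by simp
  qed
  define D where "D k i = (X k i - L i) / complex_of_real (eps k)" for k i
  have Dbd: "\<forall>k i. cmod (D k i) \<le> 1"
  proof (intro allI)
    fix k i
    show "cmod (D k i) \<le> 1"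
    proof (cases "i < r + s")
      case True
      then have "cmod (X k i - L i) \<le> eps k" by (rule le)
      then show ?thesis using epos[of k] unfolding D_def by (simp add: norm_divide divide_le_eq_1)
    next
      case False then show ?thesis using Lz Xz D_def by simp
    qed
  qed
  have Dz: "\<forall>k i. i \<ge> r + s \<longrightarrow> D k i = 0" using Lz Xz D_def by simp
  have Dn: "(\<Sum>i<r+s. cmod (D k i)) = 1" for k
  proof -
    have "(\<Sum>i<r+s. cmod (D k i)) = (\<Sum>i<r+s. cmod (X k i - L i) / eps k)"
      using epos[of k] unfolding D_def by (intro sum.cong) (auto simp: norm_divide)
    also have "\<dots> = eps k / eps k" by (subst sum_divide_distrib[symmetric]) (simp add: eps_def)
    finally show ?thesis using epos[of k] by simp
  qed
  obtain h d where h: "strict_mono h" and hd: "\<forall>i. (\<lambda>k. D (h k) i) \<longlonglongrightarrow> d i"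
    and dz: "\<forall>i\<ge>r+s. d i = 0"
    using bw[OF Dbd Dz] by blast
  have dn: "(\<Sum>i<r+s. cmod (d i)) = 1"
  proof -
    have "(\<lambda>k. \<Sum>i<r+s. cmod (D (h k) i)) \<longlonglongrightarrow> (\<Sum>i<r+s. cmod (d i))"
      using hd by (intro tendsto_intros) auto
    then have "(\<lambda>k. 1) \<longlonglongrightarrow> (\<Sum>i<r+s. cmod (d i))" using Dn by simp
    then show ?thesis by (simp add: LIMSEQ_const_iff)
  qed
  define e where "e k = complex_of_real (eps (h k))" for k
  have e0: "e \<longlonglongrightarrow> 0"
  proof -
    have "(eps \<circ> h) \<longlonglongrightarrow> 0" using elim h by (rule LIMSEQ_subseq_LIMSEQ)
    then have "(\<lambda>k. complex_of_real ((eps \<circ> h) k)) \<longlonglongrightarrow> complex_of_real 0" by (intro tendsto_intros)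
    then show ?thesis unfolding e_def by (simp add: o_def)
  qed
  have enz: "e k \<noteq> 0" for k using epos[of "h k"] unfolding e_def by simp
  have Dh: "D (h k) i = (X (h k) i - L i) / e k" for k i unfolding D_def e_def by simp
  have Xeq: "X (h k) = (\<lambda>i. L i + e k * D (h k) i)" for k
    using enz[of k] unfolding Dh by (auto simp: field_simps)
  define L' where "L' = (\<lambda>j. L (r + j))"
  define d' where "d' = (\<lambda>j. d (r + j))"
  have eqL: "PP m r L = [:1:] + PP n s L'" using LS unfolding L'_def by (simp add: solset_def)
  have eqX: "PP m r (X k) = [:1:] + PP n s (\<lambda>j. X k (r + j))" for k using XS[of k] by (simp add: solset_def)
  have pt: "poly (AA m r L * SS (\<lambda>i. of_nat (m i) * d i) r L) z =
            poly (AA n s L' * SS (\<lambda>i. of_nat (n i) * d' i) s L') z" for z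
  proof -
    have l1: "(\<lambda>k. (poly (PP m r (\<lambda>i. L i + e k * D (h k) i)) z - poly (PP m r L) z) / e k)
      \<longlonglongrightarrow> - (poly (AA m r L) z * poly (SS (\<lambda>i. of_nat (m i) * d i) r L) z)"
      using hd by (intro dq_PP m1 e0 enz) auto
    have l2: "(\<lambda>k. (poly (PP n s (\<lambda>j. L' j + e k * D (h k) (r + j))) z - poly (PP n s L') z) / e k)
      \<longlonglongrightarrow> - (poly (AA n s L') z * poly (SS (\<lambda>i. of_nat (n i) * d' i) s L') z)"
      using hd unfolding d'_def by (intro dq_PP n1 e0 enz) auto
    have "(poly (PP m r (\<lambda>i. L i + e k * D (h k) i)) z - poly (PP m r L) z) / e k
        = (poly (PP n s (\<lambda>j. L' j + e k * D (h k) (r + j))) z - poly (PP n s L') z) / e k" for k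
    proof -
      have a: "PP m r (\<lambda>i. L i + e k * D (h k) i) = [:1:] + PP n s (\<lambda>j. L' j + e k * D (h k) (r + j))"
        using eqX[of "h k"] unfolding Xeq L'_def by simp
      show ?thesis unfolding a eqL by simp
    qed
    then have "(\<lambda>k. (poly (PP m r (\<lambda>i. L i + e k * D (h k) i)) z - poly (PP m r L) z) / e k)
        = (\<lambda>k. (poly (PP n s (\<lambda>j. L' j + e k * D (h k) (r + j))) z - poly (PP n s L') z) / e k)"
      by (rule ext)
    with l1 have l1': "(\<lambda>k. (poly (PP n s (\<lambda>j. L' j + e k * D (h k) (r + j))) z - poly (PP n s L') z) / e k)
      \<longlonglongrightarrow> - (poly (AA m r L) z * poly (SS (\<lambda>i. of_nat (m i) * d i) r L) z)" by simp
    have "- (poly (AA m r L) z * poly (SS (\<lambda>i. of_nat (m i) * d i) r L) z)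
       = - (poly (AA n s L') z * poly (SS (\<lambda>i. of_nat (n i) * d' i) s L') z)"
      using LIMSEQ_unique[OF l1' l2] .
    then show ?thesis by simp
  qed
  have te: "AA m r L * SS (\<lambda>i. of_nat (m i) * d i) r L = AA n s L' * SS (\<lambda>i. of_nat (n i) * d' i) s L'"
    by (rule poly_eqI_fun) (rule pt)
  have cd1: "(\<Sum>i<r. of_nat (m i) * d i) = 0"
  proof -
    have "(\<lambda>k. \<Sum>i<r. of_nat (m i) * D (h k) i) \<longlonglongrightarrow> (\<Sum>i<r. of_nat (m i) * d i)"
      using hd by (intro tendsto_intros) auto
    moreover have "(\<Sum>i<r. of_nat (m i) * D (h k) i) = 0" for k
    proof -
      have "(\<Sum>i<r. of_nat (m i) * D (h k) i) = ((\<Sum>i<r. of_nat (m i) * X (h k) i) - (\<Sum>i<r. of_nat (m i) * L i)) / e k"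
        unfolding Dh sum_subtractf[symmetric] sum_divide_distrib by (intro sum.cong) (auto simp: algebra_simps diff_divide_distrib)
      also have "\<dots> = 0" using XS[of "h k"] LS by (simp add: solset_def)
      finally show ?thesis .
    qed
    ultimately have "(\<lambda>k. 0) \<longlonglongrightarrow> (\<Sum>i<r. of_nat (m i) * d i)" by simp
    then show ?thesis by (simp add: LIMSEQ_const_iff)
  qed
  have cd2: "(\<Sum>i<s. of_nat (n i) * d' i) = 0"
  proof -
    have "(\<lambda>k. \<Sum>i<s. of_nat (n i) * D (h k) (r + i)) \<longlonglongrightarrow> (\<Sum>i<s. of_nat (n i) * d' i)"
      using hd unfolding d'_def by (intro tendsto_intros) auto
    moreover have "(\<Sum>i<s. of_nat (n i) * D (h k) (r + i)) = 0" for k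
    proof -
      have "(\<Sum>i<s. of_nat (n i) * D (h k) (r + i)) = ((\<Sum>i<s. of_nat (n i) * X (h k) (r + i)) - (\<Sum>i<s. of_nat (n i) * L (r + i))) / e k"
        unfolding Dh sum_subtractf[symmetric] sum_divide_distrib by (intro sum.cong) (auto simp: algebra_simps diff_divide_distrib)
      also have "\<dots> = 0" using XS[of "h k"] LS by (simp add: solset_def)
      finally show ?thesis .
    qed
    ultimately have "(\<lambda>k. 0) \<longlonglongrightarrow> (\<Sum>i<s. of_nat (n i) * d' i)" by simp
    then show ?thesis by (simp add: LIMSEQ_const_iff)
  qed
  have d1: "d i = 0" if "i < r" for i
    by (rule key_tangent[OF m1 n1 sm sn rs eqL _ cd1 te that]) simp
  have eqL2: "PP n s L' = [:-1:] + PP m r L" using eqL by simp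
  have d2: "d' j = 0" if "j < s" for j
    by (rule key_tangent[OF n1 m1 sn sm _ eqL2 _ cd2 te[symmetric] that]) (use rs in simp)+
  have "(\<Sum>i<r+s. cmod (d i)) = (\<Sum>i<r. cmod (d i)) + (\<Sum>j<s. cmod (d (r + j)))"
    by (rule sum_split_add)
  also have "\<dots> = 0" using d1 d2 unfolding d'_def by simp
  finally show False using dn by simp
qed

lemma solset_bounded:
  assumes m1: "\<forall>i<r. m i \<ge> 1" and n1: "\<forall>k<s. n k \<ge> 1"
    and sm: "sum m {..<r} = N" and sn: "sum n {..<s} = N" and rs: "r + s = N + 1" and N1: "N \<ge> 1"
  shows "\<exists>M. \<forall>x\<in>solset m r n s. \<forall>i. cmod (x i) \<le> M"
proof (rule ccontr)
  assume "\<not> ?thesis"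
  then have "\<forall>k::nat. \<exists>x. x \<in> solset m r n s \<and> (\<exists>i. cmod (x i) > real k + 1)"
    by (meson not_le)
  then have "\<exists>X. \<forall>k. X k \<in> solset m r n s \<and> (\<exists>i. cmod (X k i) > real k + 1)" by (rule choice)
  then obtain X where XS: "\<And>k. X k \<in> solset m r n s" and big: "\<And>k. \<exists>i. cmod (X k i) > real k + 1"
    by blast
  have Xz: "X k i = 0" if "i \<ge> r + s" for k i using XS[of k] that by (simp add: solset_def)
  define t where "t k = (\<Sum>i<r+s. cmod (X k i))" for k
  have tbig: "t k \<ge> real k + 1" for k
  proof -
    obtain i where i: "cmod (X k i) > real k + 1" using big by blast
    then have "i < r + s" using Xz[of i k] by (cases "i < r + s") auto
    then have "cmod (X k i) \<le> t k" unfolding t_def by (intro member_le_sum) auto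
    then show ?thesis using i by linarith
  qed
  have tpos: "t k > 0" for k using tbig[of k] by linarith
  define T where "T k = complex_of_real (t k)" for k
  have Tnz: "T k \<noteq> 0" for k using tpos[of k] T_def by simp
  define U where "U k i = X k i / T k" for k i
  have Ubd: "\<forall>k i. cmod (U k i) \<le> 1"
  proof (intro allI)
    fix k i
    show "cmod (U k i) \<le> 1"
    proof (cases "i < r + s")
      case True
      then have "cmod (X k i) \<le> t k" unfolding t_def by (intro member_le_sum) auto
      then show ?thesis using tpos[of k] unfolding U_def T_def by (simp add: norm_divide divide_le_eq_1)
    next
      case False then show ?thesis using Xz U_def by simp
    qed
  qed
  have Uz: "\<forall>k i. i \<ge> r + s \<longrightarrow> U k i = 0" using Xz U_def by simp
  have Un: "(\<Sum>i<r+s. cmod (U k i)) = 1" for k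
  proof -
    have "(\<Sum>i<r+s. cmod (U k i)) = (\<Sum>i<r+s. cmod (X k i) / t k)"
      using tpos[of k] unfolding U_def T_def by (intro sum.cong) (auto simp: norm_divide)
    also have "\<dots> = t k / t k" by (subst sum_divide_distrib[symmetric]) (simp add: t_def)
    finally show ?thesis using tpos[of k] by simp
  qed
  obtain h L where h: "strict_mono h" and hL: "\<forall>i. (\<lambda>k. U (h k) i) \<longlonglongrightarrow> L i"
    and Lz: "\<forall>i\<ge>r+s. L i = 0"
    using bw[OF Ubd Uz] by blast
  have Ln: "(\<Sum>i<r+s. cmod (L i)) = 1"
  proof -
    have "(\<lambda>k. \<Sum>i<r+s. cmod (U (h k) i)) \<longlonglongrightarrow> (\<Sum>i<r+s. cmod (L i))"
      using hL by (intro tendsto_intros) auto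
    then have "(\<lambda>k. 1) \<longlonglongrightarrow> (\<Sum>i<r+s. cmod (L i))" using Un by simp
    then show ?thesis by (simp add: LIMSEQ_const_iff)
  qed
  define L' where "L' = (\<lambda>j. L (r + j))"
  have r1: "r \<ge> 1"
  proof (rule ccontr)
    assume "\<not> r \<ge> 1" then have "r = 0" by simp
    then show False using sm N1 by simp
  qed
  have cd: "(\<Sum>i<r. of_nat (m i) * L i) = 0"
  proof -
    have "(\<lambda>k. \<Sum>i<r. of_nat (m i) * U (h k) i) \<longlonglongrightarrow> (\<Sum>i<r. of_nat (m i) * L i)"
      using hL by (intro tendsto_intros) auto
    moreover have "(\<Sum>i<r. of_nat (m i) * U (h k) i) = 0" for k
    proof -
      have "(\<Sum>i<r. of_nat (m i) * U (h k) i) = (\<Sum>i<r. of_nat (m i) * X (h k) i) / T (h k)"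
        unfolding U_def sum_divide_distrib by (intro sum.cong) auto
      also have "\<dots> = 0" using XS[of "h k"] by (simp add: solset_def)
      finally show ?thesis .
    qed
    ultimately have "(\<lambda>k. 0) \<longlonglongrightarrow> (\<Sum>i<r. of_nat (m i) * L i)" by simp
    then show ?thesis by (simp add: LIMSEQ_const_iff)
  qed
  have eqPQ: "PP m r L = PP n s L'"
  proof (rule poly_eqI_fun)
    fix z
    have diff: "poly (PP m r (U k)) z - poly (PP n s (\<lambda>j. U k (r + j))) z = 1 / T k ^ N" for k
    proof -
      have "PP m r (X k) = [:1:] + PP n s (\<lambda>j. X k (r + j))" using XS[of k] by (simp add: solset_def)
      then have "poly (PP m r (X k)) (T k * z) = 1 + poly (PP n s (\<lambda>j. X k (r + j))) (T k * z)" by simp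
      then have "T k ^ N * poly (PP m r (U k)) z = 1 + T k ^ N * poly (PP n s (\<lambda>j. U k (r + j))) z"
        (is "_ * ?P = 1 + _ * ?Q")
        unfolding poly_PP_scale[OF Tnz] sm sn U_def by simp
      then have e1: "T k ^ N * (?P - ?Q) = 1" by (simp add: right_diff_distrib)
      have "T k ^ N \<noteq> 0" using Tnz[of k] by simp
      with e1 show ?thesis by (simp add: eq_divide_eq mult.commute)
    qed
    have l0: "(\<lambda>k. 1 / T (h k) ^ N) \<longlonglongrightarrow> 0"
    proof (rule Lim_null_comparison)
      show "(\<lambda>k. inverse (real (Suc k))) \<longlonglongrightarrow> 0" by (rule LIMSEQ_inverse_real_of_nat)
      show "\<forall>\<^sub>F k in sequentially. norm (1 / T (h k) ^ N) \<le> inverse (real (Suc k))"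
      proof (rule always_eventually, rule allI)
        fix k
        have hk: "h k \<ge> k" using h by (rule strict_mono_imp_increasing)
        have t1: "t (h k) \<ge> real k + 1" using tbig[of "h k"] hk by linarith
        have "norm (1 / T (h k) ^ N) = 1 / t (h k) ^ N"
          using tpos[of "h k"] unfolding T_def by (simp add: norm_divide norm_power)
        also have "\<dots> \<le> 1 / t (h k)"
        proof -
          have "t (h k) \<ge> 1" using t1 by simp
          then have "t (h k) ^ 1 \<le> t (h k) ^ N" using N1 by (intro power_increasing) auto
          then show ?thesis using tpos[of "h k"] by (simp add: frac_le)
        qed
        also have "\<dots> \<le> inverse (real (Suc k))"
          using t1 by (simp add: divide_inverse le_imp_inverse_le)
        finally show "norm (1 / T (h k) ^ N) \<le> inverse (real (Suc k))" .
      qed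
    qed
    have lim: "(\<lambda>k. poly (PP m r (U (h k))) z - poly (PP n s (\<lambda>j. U (h k) (r + j))) z)
        \<longlonglongrightarrow> poly (PP m r L) z - poly (PP n s L') z"
      using hL unfolding L'_def by (intro tendsto_intros tendsto_PP) auto
    have "(\<lambda>k. poly (PP m r (U (h k))) z - poly (PP n s (\<lambda>j. U (h k) (r + j))) z) = (\<lambda>k. 1 / T (h k) ^ N)"
      using diff by (intro ext) simp
    with lim have lim': "(\<lambda>k. 1 / T (h k) ^ N) \<longlonglongrightarrow> poly (PP m r L) z - poly (PP n s L') z" by simp
    have "poly (PP m r L) z - poly (PP n s L') z = 0" using LIMSEQ_unique[OF lim' l0] .
    then show "poly (PP m r L) z = poly (PP n s L') z" by simp
  qed
  have eS: "SS (\<lambda>i. of_nat (m i)) r L = smult (of_nat N) (AA n s L')"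
  proof (rule poly_eqI_fun)
    fix z
    have dgs: "(\<Sum>k<s. n k - 1) = r - 1"
    proof -
      have "(\<Sum>k<s. n k - 1) = N - s" using degree_AA_eq[OF n1 sn, of "\<lambda>_. 0"] unfolding degree_AA .
      then show ?thesis using rs by simp
    qed
    have pt: "poly (SS (\<lambda>i. of_nat (m i)) r (U k)) z = of_nat N * poly (AA n s (\<lambda>j. U k (r + j))) z" for k
    proof -
      have eqX: "PP m r (X k) = [:1:] + PP n s (\<lambda>j. X k (r + j))" using XS[of k] by (simp add: solset_def)
      have "SS (\<lambda>i. of_nat (m i)) r (X k) = smult (of_nat N) (AA n s (\<lambda>j. X k (r + j)))"
        by (rule key_alg(2)[OF m1 n1 sm sn rs eqX]) simp
      then have "T k * poly (SS (\<lambda>i. of_nat (m i)) r (X k)) (T k * z)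
          = T k * (of_nat N * poly (AA n s (\<lambda>j. X k (r + j))) (T k * z))" by simp
      then have "T k ^ r * poly (SS (\<lambda>i. of_nat (m i)) r (U k)) z
          = T k * (of_nat N * (T k ^ (r - 1) * poly (AA n s (\<lambda>j. U k (r + j))) z))"
        unfolding poly_SS_scale[OF Tnz] poly_AA_scale[OF Tnz] dgs U_def by simp
      also have "\<dots> = T k ^ r * (of_nat N * poly (AA n s (\<lambda>j. U k (r + j))) z)"
      proof -
        have "T k * T k ^ (r - 1) = T k ^ r" using r1 by (cases r) auto
        then show ?thesis by (simp add: algebra_simps)
      qed
      finally show ?thesis using Tnz[of k] by simp
    qed
    have l1: "(\<lambda>k. poly (SS (\<lambda>i. of_nat (m i)) r (U (h k))) z) \<longlonglongrightarrow> poly (SS (\<lambda>i. of_nat (m i)) r L) z"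
      using hL by (intro tendsto_SS) auto
    have l2: "(\<lambda>k. of_nat N * poly (AA n s (\<lambda>j. U (h k) (r + j))) z) \<longlonglongrightarrow> of_nat N * poly (AA n s L') z"
      using hL unfolding L'_def by (intro tendsto_intros tendsto_AA) auto
    have "(\<lambda>k. poly (SS (\<lambda>i. of_nat (m i)) r (U (h k))) z) = (\<lambda>k. of_nat N * poly (AA n s (\<lambda>j. U (h k) (r + j))) z)"
      using pt by (intro ext) simp
    with l1 have l1': "(\<lambda>k. of_nat N * poly (AA n s (\<lambda>j. U (h k) (r + j))) z) \<longlonglongrightarrow> poly (SS (\<lambda>i. of_nat (m i)) r L) z" by simp
    have "poly (SS (\<lambda>i. of_nat (m i)) r L) z = of_nat N * poly (AA n s L') z"
      using LIMSEQ_unique[OF l1' l2] .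
    then show "poly (SS (\<lambda>i. of_nat (m i)) r L) z = poly (smult (of_nat N) (AA n s L')) z" by simp
  qed
  have "(\<forall>i<r. L i = 0) \<and> (\<forall>k<s. L' k = 0)"
    by (rule key_zero[OF m1 n1 sm sn N1 eqPQ eS cd])
  then have "(\<Sum>i<r+s. cmod (L i)) = 0" unfolding sum_split_add L'_def by simp
  then show False using Ln by simp
qed

lemma solset_finite:
  assumes m1: "\<forall>i<r. m i \<ge> 1" and n1: "\<forall>k<s. n k \<ge> 1"
    and sm: "sum m {..<r} = N" and sn: "sum n {..<s} = N" and rs: "r + s = N + 1" and N1: "N \<ge> 1"
  shows "finite (solset m r n s)"
proof (rule ccontr)
  assume inf: "\<not> finite (solset m r n s)"
  obtain f :: "nat \<Rightarrow> nat \<Rightarrow> complex" where f: "inj f" "range f \<subseteq> solset m r n s"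
    using infinite_countable_subset[OF inf] by blast
  obtain M where M: "\<forall>x\<in>solset m r n s. \<forall>i. cmod (x i) \<le> M"
    using solset_bounded[OF m1 n1 sm sn rs N1] by blast
  have fS: "f k \<in> solset m r n s" for k using f(2) by auto
  have bd: "\<forall>k i. cmod (f k i) \<le> M" using M fS by blast
  have fz: "\<forall>k i. i \<ge> r + s \<longrightarrow> f k i = 0" using fS by (simp add: solset_def)
  obtain h L where h: "strict_mono h" and hL: "\<forall>i. (\<lambda>k. f (h k) i) \<longlonglongrightarrow> L i"
    using bw[OF bd fz] by blast
  have LS: "L \<in> solset m r n s" using solset_closed[of "\<lambda>k. f (h k)"] fS hL by blast
  define k0 where "k0 = (SOME k. f (h k) = L)"
  define Y where "Y k = f (h (k + Suc k0))" for k
  have YS: "Y k \<in> solset m r n s" for k unfolding Y_def by (rule fS)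
  have Yne: "Y k \<noteq> L" for k
  proof
    assume a: "Y k = L"
    then have "\<exists>k. f (h k) = L" unfolding Y_def by blast
    then have "f (h k0) = L" unfolding k0_def by (rule someI_ex)
    then have "f (h (k + Suc k0)) = f (h k0)" using a Y_def by simp
    then have "h (k + Suc k0) = h k0" using f(1) by (simp add: inj_eq)
    then have "k + Suc k0 = k0" using h by (simp add: strict_mono_eq)
    then show False by simp
  qed
  have Yc: "\<forall>i. (\<lambda>k. Y k i) \<longlonglongrightarrow> L i"
  proof
    fix i
    show "(\<lambda>k. Y k i) \<longlonglongrightarrow> L i"
      unfolding Y_def using LIMSEQ_ignore_initial_segment[OF hL[rule_format, of i], of "Suc k0"] by simp
  qed
  show False by (rule solset_isol[OF m1 n1 sm sn rs LS YS Yne Yc])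
qed

theorem mainTheorem4:
  fixes n r s :: nat and ms ns :: "nat list"
  assumes "n \<ge> 1" "r \<ge> 1" "s \<ge> 1"
    and "length ms = r" "length ns = s"
    and "\<forall>i<r. ms!i > 0" "\<forall>k<s. ns!k > 0"
    and "sum_list ms = n" "sum_list ns = n"
    and "r + s = n + 1"
  shows "finite (Vset ms ns) \<and> finite (Cset ms ns)"
proof -
  have m1: "\<forall>i<r. (nth ms) i \<ge> 1" using assms(6) by (simp add: Suc_le_eq)
  have n1: "\<forall>k<s. (nth ns) k \<ge> 1" using assms(7) by (simp add: Suc_le_eq)
  have sm: "sum (nth ms) {..<r} = n" using assms(4,8) by (simp add: sum_list_sum_nth atLeast0LessThan)
  have sn: "sum (nth ns) {..<s} = n" using assms(5,9) by (simp add: sum_list_sum_nth atLeast0LessThan)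
  have fin: "finite (solset (nth ms) r (nth ns) s)"
    by (rule solset_finite[OF m1 n1 sm sn assms(10) assms(1)])
  define enc where "enc = (\<lambda>(b :: complex list, g :: complex list) i.
      if i < r then b ! i else if i < r + s then g ! (i - r) else 0)"
  have encS: "enc bg \<in> solset (nth ms) r (nth ns) s" if bg: "bg \<in> Vset ms ns" for bg
  proof -
    obtain b g where bgd: "bg = (b, g)" by (cases bg)
    have V: "length b = r" "length g = s" "(\<Sum>i<r. of_nat (ms!i) * b!i) = 0"
      "(\<Sum>k<s. of_nat (ns!k) * g!k) = 0" "betaPoly ms b = 1 + betaPoly ns g"
      using bg assms(4,5) unfolding bgd Vset_def by auto
    let ?x = "enc (b, g)"
    have x1: "?x i = b ! i" if "i < r" for i using that unfolding enc_def by simp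
    have x2: "?x (r + k) = g ! k" if "k < s" for k using that unfolding enc_def by simp
    have x3: "?x i = 0" if "i \<ge> r + s" for i using that unfolding enc_def by simp
    have s1: "(\<Sum>i<r. of_nat (ms!i) * ?x i) = 0" using V(3) x1 by simp
    have s2: "(\<Sum>k<s. of_nat (ns!k) * ?x (r + k)) = 0" using V(4) x2 by simp
    have p1: "PP (nth ms) r ?x = betaPoly ms b"
      unfolding PP_def betaPoly_def lin_def using assms(4) x1 by simp
    have p2: "PP (nth ns) s (\<lambda>k. ?x (r + k)) = betaPoly ns g"
      unfolding PP_def betaPoly_def lin_def using assms(5) x2 by simp
    show ?thesis unfolding bgd solset_def using s1 s2 p1 p2 V(5) x3 by simp
  qed
  have inj: "inj_on enc (Vset ms ns)"
  proof (rule inj_onI)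
    fix bg bg' assume a: "bg \<in> Vset ms ns" "bg' \<in> Vset ms ns" "enc bg = enc bg'"
    obtain b g where bgd: "bg = (b, g)" by (cases bg)
    obtain b' g' where bgd': "bg' = (b', g')" by (cases bg')
    have L: "length b = r" "length g = s" "length b' = r" "length g' = s"
      using a(1,2) assms(4,5) unfolding bgd bgd' Vset_def by auto
    have "b = b'"
    proof (rule nth_equalityI)
      show "length b = length b'" using L by simp
      fix i assume "i < length b"
      then have "i < r" using L by simp
      then show "b ! i = b' ! i" using fun_cong[OF a(3), of i] unfolding bgd bgd' enc_def by simp
    qed
    moreover have "g = g'"
    proof (rule nth_equalityI)
      show "length g = length g'" using L by simp
      fix k assume "k < length g"
      then have "k < s" using L by simp
      then show "g ! k = g' ! k" using fun_cong[OF a(3), of "r + k"] unfolding bgd bgd' enc_def by simp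
    qed
    ultimately show "bg = bg'" using bgd bgd' by simp
  qed
  have "enc ` Vset ms ns \<subseteq> solset (nth ms) r (nth ns) s" using encS by blast
  then have "finite (enc ` Vset ms ns)" using fin finite_subset by blast
  then have fV: "finite (Vset ms ns)" using inj finite_imageD by blast
  moreover have "finite (Cset ms ns)" unfolding Cset_def using fV by simp
  ultimately show ?thesis by simp
qed


end
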